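(* Let $Q$ be a quiver (with no framing and arbitrary orientation) whose underlying graph is an affine Dynkin graph of type $\widetilde{D}_r$, $\widetilde{E}_6$, $\widetilde{E}_7$ or $\widetilde{E}_8$, let $\beta=(n,\dots,n)$, and put the complete standard filtration at each vertex. Then $\mathbb{C}[\mathfrak{b}^{\oplus Q_1}]^{\mathbb{U}_\beta}\cong\mathbb{C}[\mathfrak{t}^{\oplus Q_1}]$, i.e. the invariant ring is the subalgebra generated by the diagonal entries of the matrices $A_a$, $a\in Q_1$.
   Context: At each vertex put $\mathbb{C}^n$ with flag $0\subset\mathbb{C}^1\subset\cdots\subset\mathbb{C}^n$ (standard coordinate subspaces). Then the filtered representation space is $\mathfrak{b}^{\oplus Q_1}$, tuples $(A_a)_{a\in Q_1}$ of upper triangular $n\times n$ matrices. $\mathbb{U}_\beta=U^{Q_0}$, $U$ the upper unitriangular $n\times n$ matrices, acting by $(u_i)\cdot(A_a)=(u_{h(a)}A_au_{t(a)}^{-1})$ where $h,t$ are head and tail. $\mathfrak{t}$ denotes diagonal matrices. *)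

theory Defs
  imports Complex_Main
begin

(* n x n complex matrices are represented as nat => nat => complex, indices 0..n-1,
   canonically zero outside the index range. *)

definition sqmats :: "nat \<Rightarrow> (nat \<Rightarrow> nat \<Rightarrow> complex) set" where
  "sqmats n = {M. \<forall>i j. \<not> (i < n \<and> j < n) \<longrightarrow> M i j = 0}"

definition mmul :: "nat \<Rightarrow> (nat \<Rightarrow> nat \<Rightarrow> complex) \<Rightarrow> (nat \<Rightarrow> nat \<Rightarrow> complex) \<Rightarrow> (nat \<Rightarrow> nat \<Rightarrow> complex)" where
  "mmul n M N = (\<lambda>i j. if i < n \<and> j < n then (\<Sum>k<n. M i k * N k j) else 0)"

definition mid :: "nat \<Rightarrow> (nat \<Rightarrow> nat \<Rightarrow> complex)" where
  "mid n = (\<lambda>i j. if i < n \<and> i = j then 1 else 0)"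

definition minv :: "nat \<Rightarrow> (nat \<Rightarrow> nat \<Rightarrow> complex) \<Rightarrow> (nat \<Rightarrow> nat \<Rightarrow> complex)" where
  "minv n M = (SOME N. N \<in> sqmats n \<and> mmul n M N = mid n \<and> mmul n N M = mid n)"

definition borel :: "nat \<Rightarrow> (nat \<Rightarrow> nat \<Rightarrow> complex) set" where
  "borel n = {M \<in> sqmats n. \<forall>i j. j < i \<longrightarrow> M i j = 0}"

definition unitri :: "nat \<Rightarrow> (nat \<Rightarrow> nat \<Rightarrow> complex) set" where
  "unitri n = {M \<in> borel n. \<forall>i<n. M i i = 1}"

definition rep_space :: "'e set \<Rightarrow> nat \<Rightarrow> ('e \<Rightarrow> nat \<Rightarrow> nat \<Rightarrow> complex) set" where
  "rep_space Q1 n = {A. (\<forall>a\<in>Q1. A a \<in> borel n) \<and> (\<forall>a. a \<notin> Q1 \<longrightarrow> A a = (\<lambda>i j. 0))}"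

definition Ugrp :: "'v set \<Rightarrow> nat \<Rightarrow> ('v \<Rightarrow> nat \<Rightarrow> nat \<Rightarrow> complex) set" where
  "Ugrp Q0 n = {u. (\<forall>x\<in>Q0. u x \<in> unitri n) \<and> (\<forall>x. x \<notin> Q0 \<longrightarrow> u x = mid n)}"

definition act :: "'e set \<Rightarrow> ('e \<Rightarrow> 'v) \<Rightarrow> ('e \<Rightarrow> 'v) \<Rightarrow> nat \<Rightarrow>
    ('v \<Rightarrow> nat \<Rightarrow> nat \<Rightarrow> complex) \<Rightarrow> ('e \<Rightarrow> nat \<Rightarrow> nat \<Rightarrow> complex) \<Rightarrow> ('e \<Rightarrow> nat \<Rightarrow> nat \<Rightarrow> complex)" where
  "act Q1 h t n u A = (\<lambda>a. if a \<in> Q1 then mmul n (mmul n (u (h a)) (A a)) (minv n (u (t a))) else (\<lambda>i j. 0))"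

inductive_set polyfuns :: "('x \<Rightarrow> complex) set \<Rightarrow> ('x \<Rightarrow> complex) set" for G where
  pf_const: "(\<lambda>_. c) \<in> polyfuns G"
| pf_gen: "g \<in> G \<Longrightarrow> g \<in> polyfuns G"
| pf_add: "f \<in> polyfuns G \<Longrightarrow> g \<in> polyfuns G \<Longrightarrow> (\<lambda>x. f x + g x) \<in> polyfuns G"
| pf_mult: "f \<in> polyfuns G \<Longrightarrow> g \<in> polyfuns G \<Longrightarrow> (\<lambda>x. f x * g x) \<in> polyfuns G"

definition coords :: "'e set \<Rightarrow> nat \<Rightarrow> (('e \<Rightarrow> nat \<Rightarrow> nat \<Rightarrow> complex) \<Rightarrow> complex) set" where
  "coords Q1 n = {(\<lambda>A. A a i j) | a i j. a \<in> Q1 \<and> i \<le> j \<and> j < n}"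

definition diag_coords :: "'e set \<Rightarrow> nat \<Rightarrow> (('e \<Rightarrow> nat \<Rightarrow> nat \<Rightarrow> complex) \<Rightarrow> complex) set" where
  "diag_coords Q1 n = {(\<lambda>A. A a i i) | a i. a \<in> Q1 \<and> i < n}"

definition arm_edges :: "nat \<Rightarrow> nat \<Rightarrow> nat set set" where
  "arm_edges s l = {{0, s}} \<union> {{i, Suc i} | i. s \<le> i \<and> i + 1 < s + l}"

(* star T(p,q,s): centre 0, arms of lengths p,q,s *)
definition star_vertices :: "nat \<Rightarrow> nat \<Rightarrow> nat \<Rightarrow> nat set" where
  "star_vertices p q s = {0 .. p + q + s}"
definition star_edges :: "nat \<Rightarrow> nat \<Rightarrow> nat \<Rightarrow> nat set set" where
  "star_edges p q s = arm_edges 1 p \<union> arm_edges (p + 1) q \<union> arm_edges (p + q + 1) s"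

definition Dt_vertices :: "nat \<Rightarrow> nat set" where
  "Dt_vertices r = {0 .. r}"
definition Dt_edges :: "nat \<Rightarrow> nat set set" where
  "Dt_edges r = {{0,2}, {1,2}, {r-2, r-1}, {r-2, r}} \<union> {{i, Suc i} | i. 2 \<le> i \<and> i < r - 2}"

definition underlying_iso :: "'v set \<Rightarrow> 'e set \<Rightarrow> ('e \<Rightarrow> 'v) \<Rightarrow> ('e \<Rightarrow> 'v) \<Rightarrow> nat set \<Rightarrow> nat set set \<Rightarrow> bool" where
  "underlying_iso Q0 Q1 h t V E \<longleftrightarrow>
     (\<exists>\<phi>. bij_betw \<phi> Q0 V \<and> bij_betw (\<lambda>a. {\<phi> (t a), \<phi> (h a)}) Q1 E)"

definition affine_DE :: "'v set \<Rightarrow> 'e set \<Rightarrow> ('e \<Rightarrow> 'v) \<Rightarrow> ('e \<Rightarrow> 'v) \<Rightarrow> bool" where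
  "affine_DE Q0 Q1 h t \<longleftrightarrow>
     (\<exists>r\<ge>4. underlying_iso Q0 Q1 h t (Dt_vertices r) (Dt_edges r))
   \<or> underlying_iso Q0 Q1 h t (star_vertices 2 2 2) (star_edges 2 2 2)
   \<or> underlying_iso Q0 Q1 h t (star_vertices 1 3 3) (star_edges 1 3 3)
   \<or> underlying_iso Q0 Q1 h t (star_vertices 1 2 5) (star_edges 1 2 5)"

end

theory Submission
  imports Defs "HOL-Computational_Algebra.Polynomial"
begin

lemma mmul_sq: "mmul n A B \<in> sqmats n"
  by (auto simp: mmul_def sqmats_def)

lemma mmul_assoc: "mmul n (mmul n A B) C = mmul n A (mmul n B C)"
proof (intro ext)
  fix i j
  show "mmul n (mmul n A B) C i j = mmul n A (mmul n B C) i j"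
  proof (cases "i < n \<and> j < n")
    case True
    have "(\<Sum>k<n. (\<Sum>l<n. A i l * B l k) * C k j) = (\<Sum>k<n. \<Sum>l<n. A i l * B l k * C k j)"
      by (simp add: sum_distrib_right)
    also have "\<dots> = (\<Sum>l<n. \<Sum>k<n. A i l * B l k * C k j)" by (rule sum.swap)
    also have "\<dots> = (\<Sum>l<n. A i l * (\<Sum>k<n. B l k * C k j))"
      by (simp add: sum_distrib_left mult.assoc)
    finally show ?thesis using True by (simp add: mmul_def)
  qed (auto simp: mmul_def)
qed


lemma borel_sq: "M \<in> borel n \<Longrightarrow> M \<in> sqmats n" by (simp add: borel_def)

lemma sum_single_lt:
  fixes i n :: nat
  assumes "i < n" "\<And>k. k < n \<Longrightarrow> k \<noteq> i \<Longrightarrow> f k = 0"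
  shows "(\<Sum>k<n. f k) = (f i :: complex)"
proof -
  have "(\<Sum>k<n. f k) = (\<Sum>k\<in>{i}. f k)"
    apply (rule sum.mono_neutral_right)
    using assms by auto
  then show ?thesis by simp
qed

lemma mid_left: "M \<in> sqmats n \<Longrightarrow> mmul n (mid n) M = M"
proof (intro ext)
  fix i j assume M: "M \<in> sqmats n"
  show "mmul n (mid n) M i j = M i j"
  proof (cases "i < n \<and> j < n")
    case True
    have "(\<Sum>k<n. mid n i k * M k j) = mid n i i * M i j"
      by (rule sum_single_lt) (use True in \<open>auto simp: mid_def\<close>)
    then show ?thesis using True by (simp add: mmul_def mid_def)
  qed (use M in \<open>auto simp: mmul_def sqmats_def\<close>)
qed

lemma mid_right: "M \<in> sqmats n \<Longrightarrow> mmul n M (mid n) = M"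
proof (intro ext)
  fix i j assume M: "M \<in> sqmats n"
  show "mmul n M (mid n) i j = M i j"
  proof (cases "i < n \<and> j < n")
    case True
    have "(\<Sum>k<n. M i k * mid n k j) = M i j * mid n j j"
      by (rule sum_single_lt) (use True in \<open>auto simp: mid_def\<close>)
    then show ?thesis using True by (simp add: mmul_def mid_def)
  qed (use M in \<open>auto simp: mmul_def sqmats_def\<close>)
qed

lemma mmul_borel:
  assumes "A \<in> borel n" "B \<in> borel n"
  shows "mmul n A B \<in> borel n" and "\<And>i. i < n \<Longrightarrow> mmul n A B i i = A i i * B i i"
proof -
  show "mmul n A B \<in> borel n"
    unfolding borel_def
  proof (intro CollectI conjI allI impI)
    show "mmul n A B \<in> sqmats n" by (rule mmul_sq)
    fix i j :: nat assume "j < i"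
    have "\<forall>k<n. A i k * B k j = 0"
    proof (intro allI impI)
      fix k assume "k < n"
      show "A i k * B k j = 0"
      proof (cases "k < i")
        case True then show ?thesis using assms by (simp add: borel_def)
      next
        case False then have "j < k" using \<open>j < i\<close> by simp
        then show ?thesis using assms by (simp add: borel_def)
      qed
    qed
    then have "(\<Sum>k<n. A i k * B k j) = 0" by (intro sum.neutral) auto
    then show "mmul n A B i j = 0" by (simp add: mmul_def)
  qed
  fix i assume "i < n"
  have "(\<Sum>k<n. A i k * B k i) = A i i * B i i"
  proof (rule sum_single_lt[OF \<open>i<n\<close>])
    fix k assume "k < n" "k \<noteq> i"
    then show "A i k * B k i = 0" using assms
      by (cases "k < i") (auto simp: borel_def)
  qed
  then show "mmul n A B i i = A i i * B i i" using \<open>i<n\<close> by (simp add: mmul_def)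
qed

function rinv :: "nat \<Rightarrow> (nat \<Rightarrow> nat \<Rightarrow> complex) \<Rightarrow> nat \<Rightarrow> nat \<Rightarrow> complex" where
  "rinv n M i j = (if i \<le> j \<and> j < n then (if i = j then 1 / M i i
       else - (\<Sum>k\<in>{i<..j}. M i k * rinv n M k j) / M i i) else 0)"
  by auto
termination by (relation "measure (\<lambda>(n,M,i,j). j - i)") auto

declare rinv.simps [simp del]

lemma rinv_borel: "rinv n M \<in> borel n"
  by (auto simp: borel_def sqmats_def rinv.simps)

lemma rinv_diag: "i < n \<Longrightarrow> rinv n M i i = 1 / M i i"
  by (simp add: rinv.simps)

lemma rinv_right:
  assumes "M \<in> borel n" "\<forall>i<n. M i i \<noteq> 0"
  shows "mmul n M (rinv n M) = mid n"
proof (intro ext)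
  fix i j
  show "mmul n M (rinv n M) i j = mid n i j"
  proof (cases "i < n \<and> j < n")
    case False then show ?thesis by (auto simp: mmul_def mid_def)
  next
    case True
    let ?f = "\<lambda>k. M i k * rinv n M k j"
    have z: "?f k = 0" if "k \<notin> {i..j}" for k
    proof (cases "k < i")
      case True then show ?thesis using assms by (simp add: borel_def)
    next
      case False then have "j < k" using that by auto
      then show ?thesis by (simp add: rinv.simps)
    qed
    have "(\<Sum>k<n. ?f k) = (\<Sum>k\<in>{i..j}. ?f k)"
      by (rule sum.mono_neutral_right) (use True z in auto)
    also have "\<dots> = mid n i j"
    proof (cases "i \<le> j")
      case False then show ?thesis by (simp add: mid_def)
    next
      case le: True
      have e: "{i..j} = insert i {i<..j}" using le by auto
      have "(\<Sum>k\<in>{i..j}. ?f k) = ?f i + (\<Sum>k\<in>{i<..j}. ?f k)"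
        unfolding e by simp
      also have "\<dots> = mid n i j"
      proof (cases "i = j")
        case True then show ?thesis using assms \<open>i<n \<and> j<n\<close> by (simp add: rinv.simps mid_def)
      next
        case False
        have "?f i = M i i * (- (\<Sum>k\<in>{i<..j}. ?f k) / M i i)"
          using False le True by (simp add: rinv.simps[of n M i j])
        also have "\<dots> = - (\<Sum>k\<in>{i<..j}. ?f k)" using assms True by simp
        finally show ?thesis using False by (simp add: mid_def)
      qed
      finally show ?thesis .
    qed
    finally show ?thesis using True by (simp add: mmul_def)
  qed
qed

lemma inv_exists:
  assumes "M \<in> borel n" "\<forall>i<n. M i i \<noteq> 0"
  shows "\<exists>N\<in>borel n. (\<forall>i<n. N i i = 1 / M i i) \<and> mmul n M N = mid n \<and> mmul n N M = mid n"
proof -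
  let ?R = "rinv n M"
  let ?R' = "rinv n ?R"
  have R: "?R \<in> borel n" "\<forall>i<n. ?R i i \<noteq> 0" using assms by (auto simp: rinv_borel rinv_diag)
  have MR: "mmul n M ?R = mid n" by (rule rinv_right[OF assms])
  have RR: "mmul n ?R ?R' = mid n" by (rule rinv_right[OF R])
  have "M = mmul n M (mid n)" using assms by (simp add: mid_right borel_sq)
  also have "\<dots> = mmul n (mmul n M ?R) ?R'" by (simp add: RR mmul_assoc)
  also have "\<dots> = ?R'" by (simp add: MR mid_left borel_sq rinv_borel)
  finally have "mmul n ?R M = mid n" using RR by simp
  then show ?thesis using MR rinv_borel[of n M] by (intro bexI[of _ ?R]) (auto simp: rinv_diag)
qed

lemma minv_props:
  assumes "M \<in> borel n" "\<forall>i<n. M i i \<noteq> 0"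
  shows "minv n M \<in> borel n" "\<And>i. i < n \<Longrightarrow> minv n M i i = 1 / M i i"
    "mmul n M (minv n M) = mid n" "mmul n (minv n M) M = mid n"
proof -
  obtain N where N: "N\<in>borel n" "\<forall>i<n. N i i = 1 / M i i" "mmul n M N = mid n" "mmul n N M = mid n"
    using inv_exists[OF assms] by blast
  have ex: "\<exists>N. N \<in> sqmats n \<and> mmul n M N = mid n \<and> mmul n N M = mid n"
    using N borel_sq by blast
  have P: "minv n M \<in> sqmats n \<and> mmul n M (minv n M) = mid n \<and> mmul n (minv n M) M = mid n"
    unfolding minv_def by (rule someI_ex[OF ex])
  have "minv n M = mmul n (minv n M) (mid n)" using P by (simp add: mid_right)
  also have "\<dots> = mmul n (mmul n (minv n M) M) N" using N by (simp add: mmul_assoc)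
  also have "\<dots> = N" using P N by (simp add: mid_left borel_sq)
  finally have eq: "minv n M = N" .
  show "minv n M \<in> borel n" "\<And>i. i < n \<Longrightarrow> minv n M i i = 1 / M i i"
    "mmul n M (minv n M) = mid n" "mmul n (minv n M) M = mid n" using eq N by auto
qed

lemma unitri_borel: "u \<in> unitri n \<Longrightarrow> u \<in> borel n" by (simp add: unitri_def)

lemma minv_unitri:
  assumes "u \<in> unitri n"
  shows "minv n u \<in> unitri n" "mmul n u (minv n u) = mid n" "mmul n (minv n u) u = mid n"
proof -
  have a: "u \<in> borel n" "\<forall>i<n. u i i \<noteq> 0" using assms by (auto simp: unitri_def)
  show "minv n u \<in> unitri n" using minv_props[OF a] assms by (auto simp: unitri_def)
  show "mmul n u (minv n u) = mid n" "mmul n (minv n u) u = mid n" using minv_props[OF a] by auto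
qed

lemma mid_unitri: "mid n \<in> unitri n"
  by (auto simp: unitri_def borel_def sqmats_def mid_def)


lemma tree_step:
  fixes \<kappa> :: "'v \<Rightarrow> nat"
  assumes fin: "finite Q1"
    and hq: "\<forall>a\<in>Q1. \<kappa> (h a) \<noteq> \<kappa> (t a)"
    and ik: "inj_on (\<lambda>a. max (\<kappa> (h a)) (\<kappa> (t a))) Q1"
    and AB: "\<forall>a\<in>Q1. A a \<in> borel n \<and> (\<forall>i<n. A a i i \<noteq> 0)"
    and DB: "\<forall>a\<in>Q1. D a \<in> borel n \<and> (\<forall>i<n. D a i i = A a i i)"
  shows "\<exists>u. (\<forall>v. u v \<in> unitri n) \<and>
     (\<forall>a\<in>Q1. max (\<kappa> (h a)) (\<kappa> (t a)) < k \<longrightarrow> mmul n (u (h a)) (A a) = mmul n (D a) (u (t a)))"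
proof (induction k)
  case 0
  then show ?case using mid_unitri by (intro exI[of _ "\<lambda>_. mid n"]) auto
next
  case (Suc k)
  then obtain u where u: "\<forall>v. u v \<in> unitri n"
    "\<forall>a\<in>Q1. max (\<kappa> (h a)) (\<kappa> (t a)) < k \<longrightarrow> mmul n (u (h a)) (A a) = mmul n (D a) (u (t a))"
    by blast
  show ?case
  proof (cases "\<exists>a\<in>Q1. max (\<kappa> (h a)) (\<kappa> (t a)) = k")
    case False
    then show ?thesis using u by (intro exI[of _ u]) (auto simp: less_Suc_eq)
  next
    case True
    then obtain a where a: "a \<in> Q1" "max (\<kappa> (h a)) (\<kappa> (t a)) = k" by blast
    have uniq: "b = a" if "b \<in> Q1" "max (\<kappa> (h b)) (\<kappa> (t b)) = k" for b
      using ik a that by (auto dest: inj_onD)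
    have Ab: "A a \<in> borel n" "\<forall>i<n. A a i i \<noteq> 0" using AB a by auto
    have Db: "D a \<in> borel n" "\<forall>i<n. D a i i \<noteq> 0" using DB AB a by auto
    have Dd: "\<forall>i<n. D a i i = A a i i" using DB a by auto
    note AI = minv_props[OF Ab] and DI = minv_props[OF Db]
    have hneq: "\<kappa> (h a) \<noteq> \<kappa> (t a)" using hq a by auto
    show ?thesis
    proof (cases "\<kappa> (t a) < \<kappa> (h a)")
      case lt: True
      define new where "new = mmul n (mmul n (D a) (u (t a))) (minv n (A a))"
      define u' where "u' = u(h a := new)"
      have ut: "u (t a) \<in> borel n" "\<forall>i<n. u (t a) i i = 1" using u(1) by (auto simp: unitri_def)
      have nb: "new \<in> unitri n"
      proof -
        have b1: "mmul n (D a) (u (t a)) \<in> borel n" using mmul_borel Db ut by blast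
        have "new \<in> borel n" unfolding new_def using mmul_borel(1)[OF b1 AI(1)] .
        moreover have "\<forall>i<n. new i i = 1" unfolding new_def
          using mmul_borel(2)[OF b1 AI(1)] mmul_borel(2)[OF Db(1) ut(1)] ut(2) AI(2) Dd Ab(2) by simp
        ultimately show ?thesis by (simp add: unitri_def)
      qed
      have eqa: "mmul n (u' (h a)) (A a) = mmul n (D a) (u' (t a))"
      proof -
        have "u' (t a) = u (t a)" "u' (h a) = new" using lt by (auto simp: u'_def)
        moreover have "mmul n new (A a) = mmul n (D a) (u (t a))"
          unfolding new_def by (simp add: mmul_assoc AI(4) mid_right borel_sq[OF ut(1)])
        ultimately show ?thesis by simp
      qed
      show ?thesis
      proof (intro exI[of _ u'] conjI ballI impI allI)
        show "u' v \<in> unitri n" for v using u(1) nb by (simp add: u'_def)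
        fix b assume b: "b \<in> Q1" "max (\<kappa> (h b)) (\<kappa> (t b)) < Suc k"
        show "mmul n (u' (h b)) (A b) = mmul n (D b) (u' (t b))"
        proof (cases "max (\<kappa> (h b)) (\<kappa> (t b)) = k")
          case True then show ?thesis using uniq b eqa by auto
        next
          case False
          then have lk: "max (\<kappa> (h b)) (\<kappa> (t b)) < k" using b by auto
          then have "h b \<noteq> h a" "t b \<noteq> h a" using a lt by auto
          then show ?thesis using u(2) b lk by (simp add: u'_def)
        qed
      qed
    next
      case ge: False
      then have lt: "\<kappa> (h a) < \<kappa> (t a)" using hneq by auto
      define new where "new = mmul n (minv n (D a)) (mmul n (u (h a)) (A a))"
      define u' where "u' = u(t a := new)"
      have uh: "u (h a) \<in> borel n" "\<forall>i<n. u (h a) i i = 1" using u(1) by (auto simp: unitri_def)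
      have nb: "new \<in> unitri n"
      proof -
        have b1: "mmul n (u (h a)) (A a) \<in> borel n" using mmul_borel Ab uh by blast
        have "new \<in> borel n" unfolding new_def using mmul_borel(1)[OF DI(1) b1] .
        moreover have "\<forall>i<n. new i i = 1" unfolding new_def
          using mmul_borel(2)[OF DI(1) b1] mmul_borel(2)[OF uh(1) Ab(1)] uh(2) DI(2) Dd Ab(2) by simp
        ultimately show ?thesis by (simp add: unitri_def)
      qed
      have eqa: "mmul n (u' (h a)) (A a) = mmul n (D a) (u' (t a))"
      proof -
        have "u' (h a) = u (h a)" "u' (t a) = new" using lt by (auto simp: u'_def)
        moreover have "mmul n (D a) new = mmul n (u (h a)) (A a)"
          unfolding new_def by (simp add: mmul_assoc[symmetric] DI(3) mid_left borel_sq[OF uh(1)])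
        ultimately show ?thesis by simp
      qed
      show ?thesis
      proof (intro exI[of _ u'] conjI ballI impI allI)
        show "u' v \<in> unitri n" for v using u(1) nb by (simp add: u'_def)
        fix b assume b: "b \<in> Q1" "max (\<kappa> (h b)) (\<kappa> (t b)) < Suc k"
        show "mmul n (u' (h b)) (A b) = mmul n (D b) (u' (t b))"
        proof (cases "max (\<kappa> (h b)) (\<kappa> (t b)) = k")
          case True then show ?thesis using uniq b eqa by auto
        next
          case False
          then have lk: "max (\<kappa> (h b)) (\<kappa> (t b)) < k" using b by auto
          then have "h b \<noteq> t a" "t b \<noteq> t a" using a lt by auto
          then show ?thesis using u(2) b lk by (simp add: u'_def)
        qed
      qed
    qed
  qed
qed


lemma key_from_iso:
  fixes \<rho> :: "nat \<Rightarrow> nat" and F :: "nat \<Rightarrow> nat set"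
  assumes iso: "underlying_iso Q0 Q1 h t V E"
    and ht: "\<forall>a\<in>Q1. h a \<in> Q0 \<and> t a \<in> Q0"
    and ir: "inj_on \<rho> V"
    and EF: "\<forall>x y. {x,y} \<in> E \<longrightarrow> x \<noteq> y \<and> {x,y} = F (max (\<rho> x) (\<rho> y))"
  shows "\<exists>\<kappa>::'v\<Rightarrow>nat. inj_on \<kappa> Q0 \<and> (\<forall>a\<in>Q1. \<kappa> (h a) \<noteq> \<kappa> (t a))
           \<and> inj_on (\<lambda>a. max (\<kappa> (h a)) (\<kappa> (t a))) Q1"
proof -
  obtain \<phi> where phi: "bij_betw \<phi> Q0 V" "bij_betw (\<lambda>a. {\<phi> (t a), \<phi> (h a)}) Q1 E"
    using iso unfolding underlying_iso_def by blast
  have inV: "\<phi> x \<in> V" if "x \<in> Q0" for x using bij_betw_apply[OF phi(1) that] .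
  have inE: "{\<phi> (t a), \<phi> (h a)} \<in> E" if "a \<in> Q1" for a using bij_betw_apply[OF phi(2) that] by simp
  have i1: "inj_on (\<rho> \<circ> \<phi>) Q0"
    using comp_inj_on[OF bij_betw_imp_inj_on[OF phi(1)]] ir bij_betw_imp_surj_on[OF phi(1)] by simp
  have i2: "\<forall>a\<in>Q1. (\<rho> \<circ> \<phi>) (h a) \<noteq> (\<rho> \<circ> \<phi>) (t a)"
  proof
    fix a assume a: "a \<in> Q1"
    have "\<phi> (t a) \<noteq> \<phi> (h a)" using EF[rule_format, OF inE[OF a]] by (rule conjunct1)
    then show "(\<rho> \<circ> \<phi>) (h a) \<noteq> (\<rho> \<circ> \<phi>) (t a)"
      using inj_onD[OF ir _ inV[of "h a"] inV[of "t a"]] ht a by auto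
  qed
  have i3: "inj_on (\<lambda>a. max ((\<rho> \<circ> \<phi>) (h a)) ((\<rho> \<circ> \<phi>) (t a))) Q1"
  proof (rule inj_onI)
    fix a b assume a: "a \<in> Q1" and b: "b \<in> Q1"
      and e: "max ((\<rho> \<circ> \<phi>) (h a)) ((\<rho> \<circ> \<phi>) (t a)) = max ((\<rho> \<circ> \<phi>) (h b)) ((\<rho> \<circ> \<phi>) (t b))"
    have "{\<phi> (t a), \<phi> (h a)} = F (max (\<rho> (\<phi> (t a))) (\<rho> (\<phi> (h a))))" using EF[rule_format, OF inE[OF a]] by (rule conjunct2)
    also have "\<dots> = F (max (\<rho> (\<phi> (t b))) (\<rho> (\<phi> (h b))))" proof -
      have "max (\<rho> (\<phi> (t a))) (\<rho> (\<phi> (h a))) = max (\<rho> (\<phi> (t b))) (\<rho> (\<phi> (h b)))"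
        using e max.commute[of "\<rho> (\<phi> (t a))" "\<rho> (\<phi> (h a))"] max.commute[of "\<rho> (\<phi> (t b))" "\<rho> (\<phi> (h b))"] by simp
      then show ?thesis by (rule arg_cong)
    qed
    also have "\<dots> = {\<phi> (t b), \<phi> (h b)}" using conjunct2[OF EF[rule_format, OF inE[OF b]]] by (rule sym)
    finally show "a = b" using inj_onD[OF bij_betw_imp_inj_on[OF phi(2)] _ a b] by simp
  qed
  show ?thesis by (rule exI[of _ "\<rho> \<circ> \<phi>"]) (use i1 i2 i3 in \<open>intro conjI\<close>)
qed

definition rhoD :: "nat \<Rightarrow> nat \<Rightarrow> nat" where
  "rhoD r x = (if x = 0 then r + 1 else if x = 1 then r + 2 else x)"
definition FD :: "nat \<Rightarrow> nat \<Rightarrow> nat set" where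
  "FD r m = (if m = r + 1 then {0,2} else if m = r + 2 then {1,2} else if m = r then {r-2, r} else {m-1, m})"

lemma FD_gen: "m \<noteq> r + 1 \<Longrightarrow> m \<noteq> r + 2 \<Longrightarrow> m \<noteq> r \<Longrightarrow> FD r m = {m - 1, m}"
  by (simp add: FD_def)

lemma Dt_cond:
  assumes "r \<ge> 4"
  shows "inj_on (rhoD r) (Dt_vertices r)"
    "\<forall>x y. {x,y} \<in> Dt_edges r \<longrightarrow> x \<noteq> y \<and> {x,y} = FD r (max (rhoD r x) (rhoD r y))"
proof -
  show "inj_on (rhoD r) (Dt_vertices r)"
    by (rule inj_onI) (auto simp: rhoD_def Dt_vertices_def split: if_splits)
  show "\<forall>x y. {x,y} \<in> Dt_edges r \<longrightarrow> x \<noteq> y \<and> {x,y} = FD r (max (rhoD r x) (rhoD r y))"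
  proof (intro allI impI)
    fix x y assume "{x,y} \<in> Dt_edges r"
    then consider "{x,y} = {0,2}" | "{x,y} = {1,2}" | "{x,y} = {r-2,r-1}" | "{x,y} = {r-2,r}"
      | i where "{x,y} = {i, Suc i}" "2 \<le> i" "i < r - 2"
    proof -
      have "{x,y} = {0,2} \<or> {x,y} = {1,2} \<or> {x,y} = {r-2,r-1} \<or> {x,y} = {r-2,r} \<or>
         (\<exists>i. {x,y} = {i, Suc i} \<and> 2 \<le> i \<and> i < r - 2)"
        using \<open>{x,y} \<in> Dt_edges r\<close> unfolding Dt_edges_def by (simp only: Un_iff insert_iff mem_Collect_eq empty_iff simp_thms disj_assoc)
      then show thesis using that by blast
    qed
    then show "x \<noteq> y \<and> {x,y} = FD r (max (rhoD r x) (rhoD r y))"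
    proof cases
      case 1
      have "max (rhoD r x) (rhoD r y) = r + 1" using 1 assms by (auto simp: doubleton_eq_iff rhoD_def)
      then show ?thesis using 1 by (auto simp: FD_def doubleton_eq_iff)
    next
      case 2
      have "max (rhoD r x) (rhoD r y) = r + 2" using 2 assms by (auto simp: doubleton_eq_iff rhoD_def)
      then show ?thesis using 2 by (auto simp: FD_def doubleton_eq_iff)
    next
      case 3
      have "max (rhoD r x) (rhoD r y) = r - 1" using 3 assms by (auto simp: doubleton_eq_iff rhoD_def)
      moreover have "FD r (r - 1) = {r-2, r-1}"
        using FD_gen[of "r - 1" r] assms by (simp add: numeral_2_eq_2)
      moreover have "x \<noteq> y" using 3 assms by (auto simp: doubleton_eq_iff)
      ultimately show ?thesis using 3 by simp
    next
      case 4
      have "max (rhoD r x) (rhoD r y) = r" using 4 assms by (auto simp: doubleton_eq_iff rhoD_def)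
      moreover have "FD r r = {r-2, r}" using assms by (simp add: FD_def)
      moreover have "x \<noteq> y" using 4 assms by (auto simp: doubleton_eq_iff)
      ultimately show ?thesis using 4 by simp
    next
      case (5 i)
      have "max (rhoD r x) (rhoD r y) = Suc i" using 5 assms by (auto simp: doubleton_eq_iff rhoD_def)
      moreover have "FD r (Suc i) = {i, Suc i}" using FD_gen[of "Suc i" r] 5 assms by simp
      moreover have "x \<noteq> y" using 5 assms by (auto simp: doubleton_eq_iff)
      ultimately show ?thesis using 5 by simp
    qed
  qed
qed

definition FS :: "nat \<Rightarrow> nat \<Rightarrow> nat \<Rightarrow> nat set" where
  "FS p q m = (if m = 1 \<or> m = p + 1 \<or> m = p + q + 1 then {0, m} else {m - 1, m})"

lemma arm_cases:
  assumes "{x,y} \<in> arm_edges s l"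
  obtains "{x,y} = {0,s}" | i where "{x,y} = {i, Suc i}" "s \<le> i" "i + 1 < s + l"
proof -
  have "{x,y} = {0,s} \<or> (\<exists>i. {x,y} = {i, Suc i} \<and> s \<le> i \<and> i + 1 < s + l)"
    using assms unfolding arm_edges_def by (simp only: Un_iff insert_iff mem_Collect_eq empty_iff simp_thms disj_assoc)
  then show thesis using that by blast
qed

lemma arm_FS:
  assumes "{x,y} \<in> arm_edges s l" "s \<ge> 1" "s = 1 \<or> s = p + 1 \<or> s = p + q + 1"
    "\<forall>i. s \<le> i \<longrightarrow> i + 1 < s + l \<longrightarrow> Suc i \<noteq> 1 \<and> Suc i \<noteq> p + 1 \<and> Suc i \<noteq> p + q + 1"
  shows "x \<noteq> y \<and> {x,y} = FS p q (max x y)"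
  using assms(1)
proof (rule arm_cases)
  assume e: "{x,y} = {0,s}"
  then have "max x y = s" "x \<noteq> y" using assms(2) by (auto simp: doubleton_eq_iff)
  moreover have "FS p q s = {0, s}" using assms(3) by (auto simp: FS_def)
  ultimately show ?thesis using e by simp
next
  fix i assume e: "{x,y} = {i, Suc i}" "s \<le> i" "i + 1 < s + l"
  then have "max x y = Suc i" "x \<noteq> y" by (auto simp: doubleton_eq_iff)
  moreover have "FS p q (Suc i) = {i, Suc i}" using assms(4) e(2,3) by (simp add: FS_def)
  ultimately show ?thesis using e by simp
qed

lemma star_cond:
  assumes "p \<ge> 1" "q \<ge> 1" "s \<ge> 1"
  shows "inj_on id (star_vertices p q s)"
    "\<forall>x y. {x,y} \<in> star_edges p q s \<longrightarrow> x \<noteq> y \<and> {x,y} = FS p q (max (id x) (id y))"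
proof -
  show "inj_on id (star_vertices p q s)" by simp
  show "\<forall>x y. {x,y} \<in> star_edges p q s \<longrightarrow> x \<noteq> y \<and> {x,y} = FS p q (max (id x) (id y))"
  proof (intro allI impI)
    fix x y assume "{x,y} \<in> star_edges p q s"
    then consider "{x,y} \<in> arm_edges 1 p" | "{x,y} \<in> arm_edges (p+1) q" | "{x,y} \<in> arm_edges (p+q+1) s"
      unfolding star_edges_def Un_iff by blast
    then show "x \<noteq> y \<and> {x,y} = FS p q (max (id x) (id y))"
    proof cases
      case 1 then have "x \<noteq> y \<and> {x,y} = FS p q (max x y)" by (rule arm_FS) (use assms in auto)
      then show ?thesis by simp
    next
      case 2 then have "x \<noteq> y \<and> {x,y} = FS p q (max x y)" by (rule arm_FS) (use assms in auto)
      then show ?thesis by simp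
    next
      case 3 then have "x \<noteq> y \<and> {x,y} = FS p q (max x y)" by (rule arm_FS) (use assms in auto)
      then show ?thesis by simp
    qed
  qed
qed

lemma affine_key:
  assumes "affine_DE Q0 Q1 h t" "\<forall>a\<in>Q1. h a \<in> Q0 \<and> t a \<in> Q0"
  shows "\<exists>\<kappa>::'v\<Rightarrow>nat. inj_on \<kappa> Q0 \<and> (\<forall>a\<in>Q1. \<kappa> (h a) \<noteq> \<kappa> (t a))
           \<and> inj_on (\<lambda>a. max (\<kappa> (h a)) (\<kappa> (t a))) Q1"
  using assms(1) unfolding affine_DE_def
proof (elim disjE exE conjE)
  fix r :: nat assume "4 \<le> r" "underlying_iso Q0 Q1 h t (Dt_vertices r) (Dt_edges r)"
  then show ?thesis using key_from_iso[OF _ assms(2) Dt_cond] by blast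
next
  assume "underlying_iso Q0 Q1 h t (star_vertices 2 2 2) (star_edges 2 2 2)"
  then show ?thesis using key_from_iso[OF _ assms(2) star_cond[of 2 2 2]] by simp
next
  assume "underlying_iso Q0 Q1 h t (star_vertices 1 3 3) (star_edges 1 3 3)"
  then show ?thesis using key_from_iso[OF _ assms(2) star_cond[of 1 3 3]] by simp
next
  assume "underlying_iso Q0 Q1 h t (star_vertices 1 2 5) (star_edges 1 2 5)"
  then show ?thesis using key_from_iso[OF _ assms(2) star_cond[of 1 2 5]] by simp
qed


definition shift :: "'e set \<Rightarrow> nat \<Rightarrow> complex \<Rightarrow> ('e \<Rightarrow> nat \<Rightarrow> nat \<Rightarrow> complex) \<Rightarrow> ('e \<Rightarrow> nat \<Rightarrow> nat \<Rightarrow> complex)" where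
  "shift Q1 n s A = (\<lambda>a i j. if a \<in> Q1 \<and> i = j \<and> i < n then A a i j + s else A a i j)"

definition dg :: "('e \<Rightarrow> nat \<Rightarrow> nat \<Rightarrow> complex) \<Rightarrow> ('e \<Rightarrow> nat \<Rightarrow> nat \<Rightarrow> complex)" where
  "dg A = (\<lambda>a i j. if i = j then A a i j else 0)"

lemma poly_shift:
  assumes "f \<in> polyfuns (coords Q1 n)"
  shows "\<exists>p. \<forall>s. f (shift Q1 n s A) = poly p s"
  using assms
proof (induction rule: polyfuns.induct)
  case (pf_const c)
  then show ?case by (intro exI[of _ "[:c:]"]) simp
next
  case (pf_gen g)
  then obtain a i j where g: "g = (\<lambda>A. A a i j)" "a \<in> Q1" "i \<le> j" "j < n"
    unfolding coords_def by blast
  show ?case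
  proof (cases "i = j")
    case True
    then show ?thesis using g by (intro exI[of _ "[:A a i j, 1:]"]) (simp add: shift_def)
  next
    case False
    then show ?thesis using g by (intro exI[of _ "[:A a i j:]"]) (simp add: shift_def)
  qed
next
  case (pf_add f g)
  then obtain p q where "\<forall>s. f (shift Q1 n s A) = poly p s" "\<forall>s. g (shift Q1 n s A) = poly q s" by blast
  then show ?case by (intro exI[of _ "p + q"]) simp
next
  case (pf_mult f g)
  then obtain p q where "\<forall>s. f (shift Q1 n s A) = poly p s" "\<forall>s. g (shift Q1 n s A) = poly q s" by blast
  then show ?case by (intro exI[of _ "p * q"]) simp
qed

lemma dg_poly:
  assumes "f \<in> polyfuns (coords Q1 n)"
  shows "\<exists>g\<in>polyfuns (diag_coords Q1 n). \<forall>A. g A = f (dg A)"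
  using assms
proof (induction rule: polyfuns.induct)
  case (pf_const c)
  then show ?case by (intro bexI[of _ "\<lambda>_. c"]) (auto intro: polyfuns.pf_const)
next
  case (pf_gen g)
  then obtain a i j where g: "g = (\<lambda>A. A a i j)" "a \<in> Q1" "i \<le> j" "j < n"
    unfolding coords_def by blast
  show ?case
  proof (cases "i = j")
    case True
    have "(\<lambda>A. A a i i) \<in> diag_coords Q1 n" using g True unfolding diag_coords_def by blast
    then show ?thesis using g True
      by (intro bexI[of _ "\<lambda>A. A a i i"]) (auto simp: dg_def intro: polyfuns.pf_gen)
  next
    case False
    then show ?thesis using g
      by (intro bexI[of _ "\<lambda>_. 0"]) (auto simp: dg_def intro: polyfuns.pf_const)
  qed
next
  case (pf_add f g)
  then obtain p q where "p \<in> polyfuns (diag_coords Q1 n)" "q \<in> polyfuns (diag_coords Q1 n)"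
    "\<forall>A. p A = f (dg A)" "\<forall>A. q A = g (dg A)" by blast
  then show ?case
  proof (intro bexI[of _ "\<lambda>A. p A + q A"])
    show "(\<lambda>A. p A + q A) \<in> polyfuns (diag_coords Q1 n)"
      by (rule polyfuns.pf_add) fact+
  qed simp
next
  case (pf_mult f g)
  then obtain p q where "p \<in> polyfuns (diag_coords Q1 n)" "q \<in> polyfuns (diag_coords Q1 n)"
    "\<forall>A. p A = f (dg A)" "\<forall>A. q A = g (dg A)" by blast
  then show ?case
  proof (intro bexI[of _ "\<lambda>A. p A * q A"])
    show "(\<lambda>A. p A * q A) \<in> polyfuns (diag_coords Q1 n)"
      by (rule polyfuns.pf_mult) fact+
  qed simp
qed

lemma diag_inv:
  assumes "g \<in> polyfuns (diag_coords Q1 n)" "\<forall>a\<in>Q1. \<forall>i<n. A a i i = B a i i"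
  shows "g A = g B"
  using assms
proof (induction rule: polyfuns.induct)
  case (pf_gen g)
  then show ?case unfolding diag_coords_def by auto
qed auto

lemma act_rep:
  assumes u: "u \<in> Ugrp Q0 n" and A: "A \<in> rep_space Q1 n" and ht: "\<forall>a\<in>Q1. h a \<in> Q0 \<and> t a \<in> Q0"
  shows "act Q1 h t n u A \<in> rep_space Q1 n" "\<forall>a\<in>Q1. \<forall>i<n. act Q1 h t n u A a i i = A a i i"
proof -
  have main: "mmul n (mmul n (u (h a)) (A a)) (minv n (u (t a))) \<in> borel n \<and>
     (\<forall>i<n. mmul n (mmul n (u (h a)) (A a)) (minv n (u (t a))) i i = A a i i)" if a: "a \<in> Q1" for a
  proof -
    have uh: "u (h a) \<in> unitri n" and ut: "u (t a) \<in> unitri n"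
      using u ht a by (auto simp: Ugrp_def)
    have Aa: "A a \<in> borel n" using A a by (auto simp: rep_space_def)
    have mi: "minv n (u (t a)) \<in> unitri n" using minv_unitri(1)[OF ut] .
    have b1: "mmul n (u (h a)) (A a) \<in> borel n" using mmul_borel(1)[OF unitri_borel[OF uh] Aa] .
    show ?thesis
      using mmul_borel[OF b1 unitri_borel[OF mi]] mmul_borel(2)[OF unitri_borel[OF uh] Aa] uh mi
      by (auto simp: unitri_def)
  qed
  show "act Q1 h t n u A \<in> rep_space Q1 n"
    using main by (auto simp: rep_space_def act_def)
  show "\<forall>a\<in>Q1. \<forall>i<n. act Q1 h t n u A a i i = A a i i"
    using main by (auto simp: act_def)
qed

lemma shift_rep: "A \<in> rep_space Q1 n \<Longrightarrow> shift Q1 n s A \<in> rep_space Q1 n"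
  by (auto simp: rep_space_def shift_def borel_def sqmats_def fun_eq_iff)

lemma dg_rep: "A \<in> rep_space Q1 n \<Longrightarrow> dg A \<in> rep_space Q1 n"
  by (auto simp: rep_space_def dg_def borel_def sqmats_def fun_eq_iff)

lemma dg_shift: "dg (shift Q1 n s A) = shift Q1 n s (dg A)"
  by (auto simp: dg_def shift_def fun_eq_iff)

lemma shift_0: "shift Q1 n 0 A = A"
  by (auto simp: shift_def fun_eq_iff)

lemma orbit_diag:
  fixes \<kappa> :: "'v \<Rightarrow> nat"
  assumes fin: "finite Q1" and ht: "\<forall>a\<in>Q1. h a \<in> Q0 \<and> t a \<in> Q0"
    and hq: "\<forall>a\<in>Q1. \<kappa> (h a) \<noteq> \<kappa> (t a)"
    and ik: "inj_on (\<lambda>a. max (\<kappa> (h a)) (\<kappa> (t a))) Q1"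
    and A: "A \<in> rep_space Q1 n" and nz: "\<forall>a\<in>Q1. \<forall>i<n. A a i i \<noteq> 0"
  shows "\<exists>u\<in>Ugrp Q0 n. act Q1 h t n u A = dg A"
proof -
  have AB: "\<forall>a\<in>Q1. A a \<in> borel n \<and> (\<forall>i<n. A a i i \<noteq> 0)" using A nz by (auto simp: rep_space_def)
  have DB: "\<forall>a\<in>Q1. dg A a \<in> borel n \<and> (\<forall>i<n. dg A a i i = A a i i)"
    using dg_rep[OF A] by (auto simp: rep_space_def dg_def)
  define K where "K = Suc (Max ((\<lambda>a. max (\<kappa> (h a)) (\<kappa> (t a))) ` Q1))"
  obtain u where u: "\<forall>v. u v \<in> unitri n"
    "\<forall>a\<in>Q1. max (\<kappa> (h a)) (\<kappa> (t a)) < K \<longrightarrow> mmul n (u (h a)) (A a) = mmul n (dg A a) (u (t a))"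
    using tree_step[where D="dg A" and \<kappa>=\<kappa> and h=h and t=t and A=A and n=n and k=K, OF fin hq ik AB DB] by blast
  have eq: "mmul n (u (h a)) (A a) = mmul n (dg A a) (u (t a))" if a: "a \<in> Q1" for a
  proof -
    have "max (\<kappa> (h a)) (\<kappa> (t a)) \<le> Max ((\<lambda>a. max (\<kappa> (h a)) (\<kappa> (t a))) ` Q1)"
      using fin a by (intro Max_ge) auto
    then show ?thesis using u(2) a by (auto simp: K_def)
  qed
  define u' where "u' = (\<lambda>v. if v \<in> Q0 then u v else mid n)"
  have u'U: "u' \<in> Ugrp Q0 n" using u(1) by (auto simp: Ugrp_def u'_def)
  have "act Q1 h t n u' A = dg A"
  proof (rule ext)
    fix a
    show "act Q1 h t n u' A a = dg A a"
    proof (cases "a \<in> Q1")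
      case False
      then have "A a = (\<lambda>i j. 0)" using A by (auto simp: rep_space_def)
      then show ?thesis using False by (simp add: act_def dg_def fun_eq_iff)
    next
      case True
      have hu: "u' (h a) = u (h a)" "u' (t a) = u (t a)" using ht True by (auto simp: u'_def)
      have Dsq: "dg A a \<in> sqmats n" using DB True borel_sq by blast
      have "act Q1 h t n u' A a = mmul n (mmul n (u (h a)) (A a)) (minv n (u (t a)))"
        using True hu by (simp add: act_def)
      also have "\<dots> = mmul n (dg A a) (mmul n (u (t a)) (minv n (u (t a))))"
        using eq[OF True] by (simp add: mmul_assoc)
      also have "\<dots> = dg A a" using minv_unitri(2)[OF u(1)[rule_format]] Dsq by (simp add: mid_right)
      finally show ?thesis .
    qed
  qed
  then show ?thesis using u'U by blast
qed


theorem mainTheorem3: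
  fixes Q0 :: "'v set" and Q1 :: "'e set" and h t :: "'e \<Rightarrow> 'v" and n :: nat
  assumes "finite Q0" and "finite Q1"
    and "\<forall>a\<in>Q1. h a \<in> Q0 \<and> t a \<in> Q0"
    and "affine_DE Q0 Q1 h t"
  shows "\<forall>f \<in> polyfuns (coords Q1 n).
           (\<forall>u\<in>Ugrp Q0 n. \<forall>A\<in>rep_space Q1 n. f (act Q1 h t n u A) = f A)
           \<longleftrightarrow> (\<exists>g \<in> polyfuns (diag_coords Q1 n). \<forall>A\<in>rep_space Q1 n. f A = g A)"
proof
  fix f assume f: "f \<in> polyfuns (coords Q1 n)"
  have ht: "\<forall>a\<in>Q1. h a \<in> Q0 \<and> t a \<in> Q0" by fact
  obtain \<kappa> :: "'v \<Rightarrow> nat" where k: "\<forall>a\<in>Q1. \<kappa> (h a) \<noteq> \<kappa> (t a)"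
    "inj_on (\<lambda>a. max (\<kappa> (h a)) (\<kappa> (t a))) Q1"
    using affine_key[OF assms(4) ht] by blast
  show "(\<forall>u\<in>Ugrp Q0 n. \<forall>A\<in>rep_space Q1 n. f (act Q1 h t n u A) = f A)
           \<longleftrightarrow> (\<exists>g \<in> polyfuns (diag_coords Q1 n). \<forall>A\<in>rep_space Q1 n. f A = g A)"
  proof
    assume inv: "\<forall>u\<in>Ugrp Q0 n. \<forall>A\<in>rep_space Q1 n. f (act Q1 h t n u A) = f A"
    obtain g where g: "g \<in> polyfuns (diag_coords Q1 n)" "\<forall>A. g A = f (dg A)"
      using dg_poly[OF f] by blast
    have key: "f A = f (dg A)" if A: "A \<in> rep_space Q1 n" for A
    proof -
      obtain p where p: "\<forall>s. f (shift Q1 n s A) = poly p s" using poly_shift[OF f] by blast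
      obtain q where q: "\<forall>s. f (shift Q1 n s (dg A)) = poly q s" using poly_shift[OF f] by blast
      define Bad where "Bad = (\<lambda>(a,i). - A a i i) ` (Q1 \<times> {..<n})"
      have finB: "finite Bad" unfolding Bad_def using assms(2) by simp
      have agree: "poly p s = poly q s" if s: "s \<notin> Bad" for s
      proof -
        let ?B = "shift Q1 n s A"
        have B: "?B \<in> rep_space Q1 n" using shift_rep[OF A] .
        have nz: "\<forall>a\<in>Q1. \<forall>i<n. ?B a i i \<noteq> 0"
        proof (intro ballI allI impI)
          fix a i assume a: "a \<in> Q1" and i: "i < n"
          have "s \<noteq> - A a i i" using s a i unfolding Bad_def by force
          then show "?B a i i \<noteq> 0" using a i by (auto simp: shift_def add_eq_0_iff)
        qed
        obtain u where u: "u \<in> Ugrp Q0 n" "act Q1 h t n u ?B = dg ?B"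
          using orbit_diag[OF assms(2) ht k B nz] by blast
        have "poly p s = f ?B" using p by simp
        also have "\<dots> = f (act Q1 h t n u ?B)" using inv u(1) B by simp
        also have "\<dots> = f (shift Q1 n s (dg A))" using u(2) by (simp add: dg_shift)
        also have "\<dots> = poly q s" using q by simp
        finally show ?thesis .
      qed
      have pq: "p = q"
      proof (rule ccontr)
        assume "p \<noteq> q"
        then have "p - q \<noteq> 0" by simp
        then have fr: "finite {s. poly (p - q) s = 0}" by (rule poly_roots_finite)
        have "UNIV \<subseteq> Bad \<union> {s. poly (p - q) s = 0}" using agree by auto
        then have "finite (UNIV :: complex set)" using finB fr by (meson finite_UnI finite_subset)
        then show False using infinite_UNIV_char_0 by blast
      qed
      have "f A = f (shift Q1 n 0 A)" by (simp add: shift_0)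
      also have "\<dots> = poly q 0" using p pq by simp
      also have "\<dots> = f (dg A)" using q[rule_format, of 0] by (simp add: shift_0)
      finally show ?thesis .
    qed
    show "\<exists>g \<in> polyfuns (diag_coords Q1 n). \<forall>A\<in>rep_space Q1 n. f A = g A"
      using g key by (intro bexI[of _ g]) auto
  next
    assume "\<exists>g \<in> polyfuns (diag_coords Q1 n). \<forall>A\<in>rep_space Q1 n. f A = g A"
    then obtain g where g: "g \<in> polyfuns (diag_coords Q1 n)" "\<forall>A\<in>rep_space Q1 n. f A = g A" by blast
    show "\<forall>u\<in>Ugrp Q0 n. \<forall>A\<in>rep_space Q1 n. f (act Q1 h t n u A) = f A"
    proof (intro ballI)
      fix u A assume u: "u \<in> Ugrp Q0 n" and A: "A \<in> rep_space Q1 n"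
      note ar = act_rep[OF u A ht]
      have "f (act Q1 h t n u A) = g (act Q1 h t n u A)" using g(2) ar(1) by simp
      also have "\<dots> = g A" using diag_inv[OF g(1), of "act Q1 h t n u A" A] ar(2) by blast
      also have "\<dots> = f A" using g(2) A by simp
      finally show "f (act Q1 h t n u A) = f A" .
    qed
  qed
qed


end
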